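(* Let $F:\mathbb R^n\to\mathbb R^n$ be a monotone $\ell$-Lipschitz operator. Let $z^{(0)},z^{(-1)}\in\mathbb R^n$ and suppose there is $z^*$ with $F(z^* )=0$ and $\max\{\|z^*-z^{(0)}\|,\|z^*-z^{(-1)}\|\}\le D$. Let $\eta<\frac1{\ell\sqrt{10}}$ and let $z^{(t)}$ be the iterates $z^{(t+1)}=z^{(t)}-2\eta F(z^{(t)})+\eta F(z^{(t-1)})$, $t\ge0$. Then for every integer $T\ge1$, $$\min_{0\le t\le T-1}\|F(z^{(t)})\|\le\frac{4D}{\eta\sqrt T\sqrt{1-10\eta^2\ell^2}}.$$ More generally, for every integer $S\ge1$ with $S<T/3$, $$\min_{0\le t\le T-S}\ \max_{0\le s<S}\|F(z^{(t+s)})\|\le\frac{6D}{\eta\sqrt{T/S}\sqrt{1-10\eta^2\ell^2}}.$$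
   Context: $F$ is monotone if $\langle F(z')-F(z),z'-z\rangle\ge0$ for all $z,z'$. *)

theory Defs
  imports "HOL-Analysis.Analysis"
begin

definition monotone_op :: "('a::real_inner \<Rightarrow> 'a) \<Rightarrow> bool" where
  "monotone_op F \<longleftrightarrow> (\<forall>z z'. inner (F z' - F z) (z' - z) \<ge> 0)"

end

theory Submission
  imports Defs
begin
lemma step_alg:
  fixes a b x :: "'a::real_inner" and \<eta> :: real
  assumes "inner a x \<ge> 0" "\<eta> > 0"
  shows "(norm (x + \<eta> *\<^sub>R b - \<eta> *\<^sub>R a))\<^sup>2 \<le> (norm (x + \<eta> *\<^sub>R b))\<^sup>2 - \<eta>\<^sup>2 * (norm b)\<^sup>2 + \<eta>\<^sup>2 * (norm (a - b))\<^sup>2"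
proof -
  have "(norm (x + \<eta> *\<^sub>R b - \<eta> *\<^sub>R a))\<^sup>2 = (norm (x + \<eta> *\<^sub>R b))\<^sup>2 - \<eta>\<^sup>2 * (norm b)\<^sup>2 + \<eta>\<^sup>2 * (norm (a - b))\<^sup>2 - 2 * \<eta> * inner a x"
    unfolding power2_norm_eq_inner
    by (simp add: inner_add_left inner_add_right inner_diff_left inner_diff_right inner_commute algebra_simps power2_eq_square)
  moreover have "2 * \<eta> * inner a x \<ge> 0" using assms by simp
  ultimately show ?thesis by linarith
qed

lemma sq5: fixes p q r :: real assumes "0 \<le> p" "0 \<le> q" "r \<le> 2*p + q" "0 \<le> r"
  shows "r\<^sup>2 \<le> 5 * (p\<^sup>2 + q\<^sup>2)"
proof -
  have "r\<^sup>2 \<le> (2*p+q)\<^sup>2" using assms by (intro power_mono) auto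
  moreover have "0 \<le> (p - 2*q)\<^sup>2" by simp
  moreover have "5 * (p\<^sup>2 + q\<^sup>2) - (2*p+q)\<^sup>2 = (p - 2*q)\<^sup>2" by (simp add: power2_eq_square algebra_simps)
  ultimately show ?thesis by linarith
qed

lemma reidx: "(\<Sum>j<(k::nat). \<Sum>s<S. f (j*S+s)) = (\<Sum>n<k*S. (f n :: real))"
proof (induction k)
  case 0 then show ?case by simp
next
  case (Suc k)
  have "(\<Sum>n<Suc k*S. f n) = (\<Sum>n<k*S. f n) + (\<Sum>n\<in>{k*S..<k*S+S}. f n)"
    by (simp add: add.commute sum.atLeastLessThan_concat lessThan_atLeast0 flip: sum.atLeastLessThan_concat)
  also have "(\<Sum>n\<in>{k*S..<k*S+S}. f n) = (\<Sum>s<S. f (k*S+s))"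
    using sum.shift_bounds_nat_ivl[of f 0 "k*S" S] by (simp add: lessThan_atLeast0 add.commute)
  finally show ?case using Suc by simp
qed

lemma h2: "(2*\<eta>) *\<^sub>R (x::'a::real_vector) = \<eta> *\<^sub>R x + \<eta> *\<^sub>R x"
  by (metis mult_2 scaleR_add_left)

theorem lemma11:
  fixes F :: "'a::euclidean_space \<Rightarrow> 'a"
    and z :: "int \<Rightarrow> 'a"
    and zs :: 'a
    and L \<eta> D :: real
  assumes mono: "monotone_op F"
    and lip: "L-lipschitz_on UNIV F"
    and l_pos: "L > 0"
    and zero: "F zs = 0"
    and dist_bd: "max (norm (zs - z 0)) (norm (zs - z (-1))) \<le> D"
    and eta_pos: "\<eta> > 0"
    and eta_bd: "\<eta> < 1 / (L * sqrt 10)"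
    and iter: "\<And>t. t \<ge> 0 \<Longrightarrow> z (t + 1) = z t - (2 * \<eta>) *\<^sub>R F (z t) + \<eta> *\<^sub>R F (z (t - 1))"
  shows "(\<forall>T::nat. T \<ge> 1 \<longrightarrow>
            Min ((\<lambda>t. norm (F (z t))) ` {0 .. int T - 1})
              \<le> 4 * D / (\<eta> * sqrt (real T) * sqrt (1 - 10 * \<eta>\<^sup>2 * L\<^sup>2)))
       \<and> (\<forall>T S::nat. S \<ge> 1 \<longrightarrow> real S < real T / 3 \<longrightarrow>
            Min ((\<lambda>t. Max ((\<lambda>s. norm (F (z (t + s)))) ` {0 ..< int S})) ` {0 .. int T - int S})
              \<le> 6 * D / (\<eta> * sqrt (real T / real S) * sqrt (1 - 10 * \<eta>\<^sup>2 * L\<^sup>2)))"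
proof -
  have L: "norm (F x - F y) \<le> L * norm (x - y)" for x y
    using lipschitz_onD[OF lip, of x y] by (simp add: dist_norm)
  have D0: "norm (z 0 - zs) \<le> D" "norm (z (-1) - zs) \<le> D"
    using dist_bd by (auto simp: norm_minus_commute)
  hence Dnn: "D \<ge> 0" by (meson norm_ge_zero order_trans)
  define e where "e = \<eta> * L"
  have epos: "e > 0" using eta_pos l_pos by (simp add: e_def)
  have "e * sqrt 10 < 1" using eta_bd l_pos
    by (simp add: e_def field_simps)
  hence "(e * sqrt 10)\<^sup>2 < 1" using epos
    by (metis abs_of_pos mult_pos_pos one_power2 power2_less_imp_less real_sqrt_gt_zero zero_less_numeral abs_square_less_1 less_eq_real_def)
  hence e2: "10 * e\<^sup>2 < 1" by (simp add: power_mult_distrib)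
  define c where "c = 1 - 10 * \<eta>\<^sup>2 * L\<^sup>2"
  have c_eq: "c = 1 - 10 * e\<^sup>2" by (simp add: c_def e_def power_mult_distrib)
  have cpos: "c > 0" using e2 c_eq by simp
  define a where "a n = (norm (F (z (int n - 1))))\<^sup>2" for n :: nat
  define P where "P t = (norm (z t + \<eta> *\<^sub>R F (z (t - 1)) - zs))\<^sup>2" for t :: int
  have anonneg: "a n \<ge> 0" for n by (simp add: a_def)
  have Pnonneg: "P t \<ge> 0" for t by (simp add: P_def)
  have step: "P (t + 1) \<le> P t - \<eta>\<^sup>2 * (norm (F (z (t - 1))))\<^sup>2 + \<eta>\<^sup>2 * (norm (F (z t) - F (z (t - 1))))\<^sup>2"
    if "t \<ge> 0" for t
  proof -
    have eq: "z (t+1) + \<eta> *\<^sub>R F (z (t + 1 - 1)) - zs = (z t - zs) + \<eta> *\<^sub>R F (z (t - 1)) - \<eta> *\<^sub>R F (z t)"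
      unfolding iter[OF that] h2 by simp
    have i: "inner (F (z t)) (z t - zs) \<ge> 0"
      using mono zero unfolding monotone_op_def by (metis diff_zero)
    have p1: "P (t+1) = (norm ((z t - zs) + \<eta> *\<^sub>R F (z (t - 1)) - \<eta> *\<^sub>R F (z t)))\<^sup>2"
      by (simp only: P_def eq)
    have p2: "P t = (norm ((z t - zs) + \<eta> *\<^sub>R F (z (t - 1))))\<^sup>2"
      by (simp add: P_def algebra_simps)
    show ?thesis unfolding p1 p2
      using step_alg[OF i eta_pos, of "F (z (t - 1))"] .
  qed
  have S0: "P 1 \<le> P 0 - \<eta>\<^sup>2 * a 0 + \<eta>\<^sup>2 * (4 * L\<^sup>2 * D\<^sup>2)"
  proof -
    have "norm (F (z 0) - F (z (-1))) \<le> L * norm (z 0 - z (-1))" by (rule L)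
    also have "norm (z 0 - z (-1)) \<le> 2 * D"
      using D0 norm_triangle_ineq4[of "z 0 - zs" "z (-1) - zs"] by simp
    hence "L * norm (z 0 - z (-1)) \<le> L * (2 * D)" using l_pos by simp
    finally have "(norm (F (z 0) - F (z (-1))))\<^sup>2 \<le> (L * (2 * D))\<^sup>2"
      by (intro power_mono) auto
    hence "(norm (F (z 0) - F (z (-1))))\<^sup>2 \<le> 4 * L\<^sup>2 * D\<^sup>2" by (simp add: power_mult_distrib)
    hence "\<eta>\<^sup>2 * (norm (F (z 0) - F (z (-1))))\<^sup>2 \<le> \<eta>\<^sup>2 * (4 * L\<^sup>2 * D\<^sup>2)"
      by (intro mult_left_mono) auto
    then show ?thesis using step[of 0] by (simp add: a_def)
  qed
  have SN: "P (int n + 1) \<le> P (int n) - \<eta>\<^sup>2 * a n + 5 * \<eta>^4 * L\<^sup>2 * (a n + a (n - 1))"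
    if "n \<ge> 1" for n
  proof -
    let ?t = "int n"
    have zz: "z ?t - z (?t - 1) = \<eta> *\<^sub>R (F (z (?t - 2)) - 2 *\<^sub>R F (z (?t - 1)))"
    proof -
      have "z ?t = z (?t - 1) - (2 * \<eta>) *\<^sub>R F (z (?t - 1)) + \<eta> *\<^sub>R F (z (?t - 2))"
        using iter[of "?t - 1"] that by (simp add: algebra_simps)
      thus ?thesis unfolding h2 by (simp add: algebra_simps scaleR_2)
    qed
    have "norm (z ?t - z (?t - 1)) \<le> \<eta> * (2 * norm (F (z (?t - 1))) + norm (F (z (?t - 2))))"
      unfolding zz using eta_pos norm_triangle_ineq4[of "F (z (?t - 2))" "2 *\<^sub>R F (z (?t - 1))"]
      by simp
    hence "norm (F (z ?t) - F (z (?t - 1))) \<le> L * (\<eta> * (2 * norm (F (z (?t - 1))) + norm (F (z (?t - 2)))))"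
      using L[of "z ?t" "z (?t - 1)"] l_pos by (meson mult_left_mono less_imp_le order_trans)
    hence "norm (F (z ?t) - F (z (?t - 1))) \<le> 2 * (L * \<eta> * norm (F (z (?t - 1)))) + L * \<eta> * norm (F (z (?t - 2)))"
      by (simp add: algebra_simps)
    hence "(norm (F (z ?t) - F (z (?t - 1))))\<^sup>2 \<le> 5 * ((L * \<eta> * norm (F (z (?t - 1))))\<^sup>2 + (L * \<eta> * norm (F (z (?t - 2))))\<^sup>2)"
      using l_pos eta_pos by (intro sq5) auto
    hence "\<eta>\<^sup>2 * (norm (F (z ?t) - F (z (?t - 1))))\<^sup>2 \<le> \<eta>\<^sup>2 * (5 * ((L * \<eta> * norm (F (z (?t - 1))))\<^sup>2 + (L * \<eta> * norm (F (z (?t - 2))))\<^sup>2))"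
      by (rule mult_left_mono) auto
    also have "\<dots> = 5 * \<eta>^4 * L\<^sup>2 * ((norm (F (z (?t - 1))))\<^sup>2 + (norm (F (z (?t - 2))))\<^sup>2)"
      by (simp add: power_mult_distrib power4_eq_xxxx power2_eq_square algebra_simps)
    also have "(norm (F (z (?t - 2))))\<^sup>2 = a (n - 1)" using that by (simp add: a_def of_nat_diff)
    finally have "\<eta>\<^sup>2 * (norm (F (z ?t) - F (z (?t - 1))))\<^sup>2 \<le> 5 * \<eta>^4 * L\<^sup>2 * (a n + a (n - 1))"
      by (simp add: a_def)
    moreover have "a n = (norm (F (z (?t - 1))))\<^sup>2" by (simp add: a_def)
    ultimately show ?thesis using step[of ?t] by simp
  qed
  define K where "K = 5 * \<eta>^4 * L\<^sup>2"
  have Knn: "K \<ge> 0" by (simp add: K_def)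
  define C where "C = P 0 + \<eta>\<^sup>2 * (4 * L\<^sup>2 * D\<^sup>2)"
  have inv: "P (int (Suc N)) + \<eta>\<^sup>2 * (\<Sum>i<Suc N. a i) \<le> C + K * (2 * (\<Sum>i<Suc N. a i) - a N)" for N
  proof (induction N)
    case 0
    have X: "P (int (Suc 0)) = P 1" by simp
    have Y: "(\<Sum>i<Suc 0. a i) = a 0" by simp
    have "K * a 0 \<ge> 0" using Knn anonneg by simp
    moreover have "K * (2 * a 0 - a 0) = K * a 0" by (simp add: algebra_simps)
    ultimately show ?case unfolding X Y using S0 C_def by linarith
  next
    case (Suc N)
    define S where "S = (\<Sum>i<Suc N. a i)"
    have Y: "(\<Sum>i<Suc (Suc N). a i) = S + a (Suc N)" by (simp add: S_def)
    have X: "P (int (Suc (Suc N))) = P (int (Suc N) + 1)" by (simp add: add.commute)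
    have "P (int (Suc N) + 1) \<le> P (int (Suc N)) - \<eta>\<^sup>2 * a (Suc N) + K * (a (Suc N) + a N)"
      using SN[of "Suc N"] by (simp add: K_def)
    moreover have "K * (a (Suc N) + a N) = K * a (Suc N) + K * a N" by (simp add: algebra_simps)
    moreover have "K * (2 * S - a N) = 2 * (K * S) - K * a N" by (simp add: algebra_simps)
    moreover have "K * (2 * (S + a (Suc N)) - a (Suc N)) = 2 * (K * S) + K * a (Suc N)" by (simp add: algebra_simps)
    moreover have "\<eta>\<^sup>2 * (S + a (Suc N)) = \<eta>\<^sup>2 * S + \<eta>\<^sup>2 * a (Suc N)" by (simp add: algebra_simps)
    ultimately show ?case unfolding X Y using Suc.IH[folded S_def] by linarith
  qed
  have P0: "P 0 + \<eta>\<^sup>2 * (4 * L\<^sup>2 * D\<^sup>2) \<le> 4 * D\<^sup>2"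
  proof -
    have "norm (z 0 + \<eta> *\<^sub>R F (z (-1)) - zs) \<le> norm (z 0 - zs) + \<eta> * norm (F (z (-1)) - F zs)"
      using norm_triangle_ineq[of "z 0 - zs" "\<eta> *\<^sub>R F (z (-1))"] eta_pos zero by (simp add: algebra_simps)
    also have "\<dots> \<le> D + \<eta> * (L * D)"
      using L[of "z (-1)" zs] D0 l_pos eta_pos
      by (intro add_mono mult_left_mono) (auto intro: order_trans mult_left_mono)
    finally have "norm (z 0 + \<eta> *\<^sub>R F (z (-1)) - zs) \<le> D * (1 + e)" by (simp add: e_def algebra_simps)
    hence "P 0 \<le> (D * (1 + e))\<^sup>2" unfolding P_def by (intro power_mono) auto
    moreover have "\<eta>\<^sup>2 * (4 * L\<^sup>2 * D\<^sup>2) = 4 * e\<^sup>2 * D\<^sup>2" by (simp add: e_def power_mult_distrib)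
    moreover have "e < 1/3"
    proof (rule ccontr)
      assume "\<not> e < 1/3" hence "e\<^sup>2 \<ge> (1/3)\<^sup>2" by (intro power_mono) auto
      moreover have "(1/3::real)\<^sup>2 = 1/9" by (simp add: power2_eq_square)
      ultimately show False using e2 by linarith
    qed
    moreover have "(D * (1 + e))\<^sup>2 + 4 * e\<^sup>2 * D\<^sup>2 = D\<^sup>2 * (1 + 2 * e + 5 * e\<^sup>2)"
      by (simp add: power2_eq_square algebra_simps)
    moreover have "D\<^sup>2 * (1 + 2 * e + 5 * e\<^sup>2) \<le> D\<^sup>2 * 4"
      using e2 epos \<open>e < 1/3\<close> by (intro mult_left_mono) auto
    ultimately show ?thesis by linarith
  qed
  have sumbd: "\<eta>\<^sup>2 * c * (\<Sum>i<N. a i) \<le> 4 * D\<^sup>2" for N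
  proof (cases N)
    case 0 then show ?thesis using Dnn by simp
  next
    case (Suc M)
    define S where "S = (\<Sum>i<Suc M. a i)"
    have "\<eta>\<^sup>2 * c * S = \<eta>\<^sup>2 * S - 2 * (K * S)"
      by (simp add: c_def K_def algebra_simps power4_eq_xxxx power2_eq_square)
    moreover have "K * a M \<ge> 0" using Knn anonneg by simp
    moreover have "K * (2 * S - a M) = 2 * (K * S) - K * a M" by (simp add: algebra_simps)
    ultimately show ?thesis using inv[of M, folded S_def] P0[folded C_def] Pnonneg[of "int (Suc M)"]
      unfolding Suc S_def[symmetric] by linarith
  qed
  define B where "B = 4 * D\<^sup>2 / (\<eta>\<^sup>2 * c)"
  have sumB: "(\<Sum>i<N. a (Suc i)) \<le> B" for N
  proof -
    have "(\<Sum>i<N. a (Suc i)) \<le> (\<Sum>i<Suc N. a i)"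
      using anonneg[of 0] by (simp only: sum.lessThan_Suc_shift)
    also have "\<dots> \<le> B" using sumbd[of "Suc N"] eta_pos cpos
      by (simp add: B_def field_simps)
    finally show ?thesis .
  qed
  have fin: "m \<le> R" if "m\<^sup>2 \<le> X" "X \<le> R\<^sup>2" "R \<ge> 0" for m X R :: real
    using that by (meson order_trans power2_le_imp_le)
  show ?thesis
  proof (intro conjI allI impI)
    fix T :: nat assume T1: "T \<ge> 1"
    let ?A = "(\<lambda>t. norm (F (z t))) ` {0 .. int T - 1}"
    define m where "m = Min ?A"
    have mA: "m \<le> norm (F (z (int n)))" if "n < T" for n
      unfolding m_def using that by (intro Min_le) auto
    have m0: "m \<ge> 0" unfolding m_def using T1 by (subst Min_ge_iff) auto
    have "(\<Sum>n<T. m\<^sup>2) \<le> (\<Sum>n<T. a (Suc n))"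
      using mA m0 by (intro sum_mono) (simp add: a_def power_mono)
    hence "real T * m\<^sup>2 \<le> B" using sumB[of T] by simp
    hence "m\<^sup>2 \<le> B / real T" using T1 by (simp add: field_simps)
    moreover have "B / real T \<le> (4 * D / (\<eta> * sqrt (real T) * sqrt c))\<^sup>2"
      using eta_pos cpos T1 by (simp add: B_def power_divide power_mult_distrib field_simps)
    moreover have "4 * D / (\<eta> * sqrt (real T) * sqrt c) \<ge> 0" using Dnn eta_pos cpos by simp
    ultimately show "Min ?A \<le> 4 * D / (\<eta> * sqrt (real T) * sqrt (1 - 10 * \<eta>\<^sup>2 * L\<^sup>2))"
      using fin unfolding m_def c_def by blast
  next
    fix T S :: nat assume S1: "S \<ge> 1" and ST: "real S < real T / 3"
    define M where "M t = Max ((\<lambda>s. norm (F (z (t + s)))) ` {0 ..< int S})" for t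
    let ?A = "M ` {0 .. int T - int S}"
    define m where "m = Min ?A"
    have M0: "M t \<ge> 0" for t unfolding M_def using S1
      by (subst Max_ge_iff) auto
    have TS: "3 * S < T" using ST by linarith
    define k where "k = T div S"
    have kS: "k * S \<le> T" by (simp add: k_def)
    have kS2: "T < (k + 1) * S" using S1 unfolding k_def
      by (metis add.commute div_mult_mod_eq mod_less_divisor mult_Suc nat_add_left_cancel_less plus_1_eq_Suc less_le_trans le_refl One_nat_def Suc_le_eq)
    have k1: "k \<ge> 1" using TS kS2 by (cases k) auto
    have m0: "m \<ge> 0" unfolding m_def using TS M0 by (subst Min_ge_iff) auto
    have blk: "m\<^sup>2 \<le> (\<Sum>s<S. a (Suc (j * S + s)))" if "j < k" for j
    proof -
      have "(j + 1) * S \<le> k * S" using that by (intro mult_right_mono) auto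
      hence "j * S + S \<le> T" using kS by (simp add: algebra_simps)
      hence "int (j * S + S) \<le> int T" by (simp only: of_nat_le_iff)
      hence "int (j * S) + int S \<le> int T" by (simp only: of_nat_add)
      hence jin: "int (j * S) \<in> {0 .. int T - int S}" by simp
      have mM: "m \<le> M (int (j * S))" unfolding m_def using jin by (intro Min_le) auto
      have "M (int (j*S)) \<in> (\<lambda>s. norm (F (z (int (j*S) + s)))) ` {0 ..< int S}"
        unfolding M_def using S1 by (intro Max_in) auto
      then obtain s' where s': "s' \<in> {0..<int S}" "M (int (j*S)) = norm (F (z (int (j*S) + s')))" by auto
      define s where "s = nat s'"
      have s: "s < S" "s' = int s" using s' by (auto simp: s_def)
      have "m\<^sup>2 \<le> (M (int (j * S)))\<^sup>2"
        using mM m0 by (intro power_mono) auto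
      also have "(M (int (j * S)))\<^sup>2 = a (Suc (j * S + s))"
        using s' s by (simp add: a_def)
      also have "\<dots> \<le> (\<Sum>s<S. a (Suc (j * S + s)))"
        using s by (intro member_le_sum) (auto simp: anonneg)
      finally show ?thesis .
    qed
    have "(\<Sum>j<k. m\<^sup>2) \<le> (\<Sum>j<k. \<Sum>s<S. a (Suc (j*S+s)))"
      by (rule sum_mono) (rule blk, simp)
    also have "\<dots> = (\<Sum>n<k*S. a (Suc n))" by (rule reidx)
    also have "\<dots> \<le> B" by (rule sumB)
    finally have km: "real k * m\<^sup>2 \<le> B" by simp
    have "(k+1)*S \<le> (2*k)*S" using k1 by (intro mult_right_mono) auto
    hence "T \<le> 9*k*S" using kS2 by linarith
    hence T9: "real T \<le> 9 * real k * real S" by (metis of_nat_le_iff of_nat_mult of_nat_numeral)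
    define Q where "Q = D\<^sup>2 / (\<eta>\<^sup>2 * c)"
    have Q0: "Q \<ge> 0" using cpos by (simp add: Q_def)
    have Tpos: "real T > 0" using TS by simp
    have kpos: "real k > 0" using k1 by simp
    have Spos: "real S > 0" using S1 by simp
    have "m\<^sup>2 \<le> B / real k" using km kpos by (simp add: field_simps)
    also have "B / real k = 4 * Q / real k" by (simp add: B_def Q_def)
    also have "4 * Q / real k \<le> 36 * Q * real S / real T"
    proof -
      have "4 * Q * real T \<le> 4 * Q * (9 * real k * real S)" using T9 Q0 by (intro mult_left_mono) auto
      thus ?thesis using kpos Tpos by (simp add: field_simps)
    qed
    also have "36 * Q * real S / real T = (6 * D / (\<eta> * sqrt (real T / real S) * sqrt c))\<^sup>2"
      using cpos Tpos Spos eta_pos by (simp add: Q_def power_divide power_mult_distrib field_simps)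
    finally have "m\<^sup>2 \<le> (6 * D / (\<eta> * sqrt (real T / real S) * sqrt c))\<^sup>2" .
    moreover have "6 * D / (\<eta> * sqrt (real T / real S) * sqrt c) \<ge> 0" using Dnn eta_pos cpos by simp
    ultimately show "Min ((\<lambda>t. Max ((\<lambda>s. norm (F (z (t + s)))) ` {0 ..< int S})) ` {0 .. int T - int S}) \<le> 6 * D / (\<eta> * sqrt (real T / real S) * sqrt (1 - 10 * \<eta>\<^sup>2 * L\<^sup>2))"
      using power2_le_imp_le unfolding m_def M_def c_def by blast
  qed
qed
end
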